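(* Let $F=\{f_1,\ldots,f_N\}$ be a finite family of homeomorphisms of $\mathbb{S}^1=\mathbb{R}/\mathbb{Z}$ and $\mathbf{p}=(p_1,\ldots,p_N)$ a probability vector with all $p_j>0$. Assume $F$ is backward minimal. Let $\mu_-$ be an invariant probability measure for $(F^{-1},\mathbf{p})$, where $F^{-1}=\{f_1^{-1},\ldots,f_N^{-1}\}$, and let $\Phi_-\colon\mathbb{S}^1\to\mathbb{S}^1$ be defined by $\Phi_-(x)=\mu_-([0,x])$ (for $x\in[0,1)$). Then $$\rho(x,y):=\min\{\mu_-([x,y]),\mu_-([y,x])\}$$ is a metric on $\mathbb{S}^1$ and $(F,\mathbf{p})$ is non-expansive on average with respect to $\rho$. Moreover, the family $G=\{g_1,\ldots,g_N\}$ with $g_j:=\Phi_-\circ f_j\circ\Phi_-^{-1}$, equipped with the probabilities $\mathbf{p}$, is non-expansive on average with respect to $d$, and $L(G,d)=L(F,\rho)$.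
   Context: $d(x,y)=\min\{|y-x|,1-|y-x|\}$ is the standard metric on $\mathbb{S}^1$; $[x,y]$ denotes the closed arc from $x$ to $y$ in the positive (counterclockwise) direction. For $\omega\in\{1,\ldots,N\}^{\mathbb{N}}$ let $Z_n(x,\omega)=(f_{\omega_n}\circ\cdots\circ f_{\omega_1})(x)$. A family $F$ is forward minimal if for every nonempty open $O\subset\mathbb{S}^1$ and every $x$ there exist $n\ge0$ and $\omega$ with $Z_n(x,\omega)\in O$; $F$ is backward minimal if $F^{-1}$ is forward minimal. A Borel probability measure $\mu$ is invariant for $(H,\mathbf{p})$, $H=\{h_1,\ldots,h_N\}$, if $\mu(E)=\sum_j p_j\mu(h_j^{-1}(E))$ for all Borel $E$. $(H,\mathbf{p})$ is non-expansive on average with respect to a metric $\rho$ if $\sum_{j=1}^N p_j\rho(h_j(x),h_j(y))\le\rho(x,y)$ for all $x,y\in\mathbb{S}^1$. $L(H,\rho)$ is the set of $s\in[0,1/2]$ such that for every $j$ and every $x,y$ with $\rho(x,y)=s$ one has $\rho(h_j(x),h_j(y))=s$. *)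

theory Defs
  imports "HOL-Probability.Probability"
begin

text \<open>The circle S^1 = R/Z is represented as the unit circle in the complex plane;
  the point x in [0,1) corresponds to cis(2 pi x). \<close>

abbreviation circle :: "complex set" where
  "circle \<equiv> sphere 0 1"

definition cpos :: "complex \<Rightarrow> real" where
  "cpos z = frac (Arg z / (2 * pi))"

definition dS :: "complex \<Rightarrow> complex \<Rightarrow> real" where
  "dS x y = min \<bar>cpos y - cpos x\<bar> (1 - \<bar>cpos y - cpos x\<bar>)"

definition arc :: "complex \<Rightarrow> complex \<Rightarrow> complex set" where
  "arc x y = {z \<in> circle. frac (cpos z - cpos x) \<le> frac (cpos y - cpos x)}"

primrec Zorb :: "(nat \<Rightarrow> complex \<Rightarrow> complex) \<Rightarrow> nat \<Rightarrow> complex \<Rightarrow> (nat \<Rightarrow> nat) \<Rightarrow> complex" where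
  "Zorb h 0 x \<omega> = x"
| "Zorb h (Suc n) x \<omega> = h (\<omega> (Suc n)) (Zorb h n x \<omega>)"

definition forward_minimal :: "nat \<Rightarrow> (nat \<Rightarrow> complex \<Rightarrow> complex) \<Rightarrow> bool" where
  "forward_minimal N h \<longleftrightarrow>
     (\<forall>U x. openin (top_of_set circle) U \<and> U \<noteq> {} \<and> x \<in> circle \<longrightarrow>
        (\<exists>n \<omega>. (\<forall>k. \<omega> k \<in> {1..N}) \<and> Zorb h n x \<omega> \<in> U))"

definition inverse_family :: "(nat \<Rightarrow> complex \<Rightarrow> complex) \<Rightarrow> nat \<Rightarrow> complex \<Rightarrow> complex" where
  "inverse_family h j = inv_into circle (h j)"

definition backward_minimal :: "nat \<Rightarrow> (nat \<Rightarrow> complex \<Rightarrow> complex) \<Rightarrow> bool" where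
  "backward_minimal N h \<longleftrightarrow> forward_minimal N (inverse_family h)"

definition invariant_measure ::
  "nat \<Rightarrow> (nat \<Rightarrow> complex \<Rightarrow> complex) \<Rightarrow> (nat \<Rightarrow> real) \<Rightarrow> complex measure \<Rightarrow> bool" where
  "invariant_measure N h p \<mu> \<longleftrightarrow>
     prob_space \<mu> \<and> sets \<mu> = sets (restrict_space borel circle) \<and>
     (\<forall>E \<in> sets \<mu>. measure \<mu> E = (\<Sum>j=1..N. p j * measure \<mu> (h j -` E \<inter> circle)))"

definition nonexpansive_on_average ::
  "nat \<Rightarrow> (nat \<Rightarrow> complex \<Rightarrow> complex) \<Rightarrow> (nat \<Rightarrow> real) \<Rightarrow> (complex \<Rightarrow> complex \<Rightarrow> real) \<Rightarrow> bool" where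
  "nonexpansive_on_average N h p \<rho> \<longleftrightarrow>
     (\<forall>x\<in>circle. \<forall>y\<in>circle. (\<Sum>j=1..N. p j * \<rho> (h j x) (h j y)) \<le> \<rho> x y)"

definition Lset :: "nat \<Rightarrow> (nat \<Rightarrow> complex \<Rightarrow> complex) \<Rightarrow> (complex \<Rightarrow> complex \<Rightarrow> real) \<Rightarrow> real set" where
  "Lset N h \<rho> = {s \<in> {0..1/2}. \<forall>j\<in>{1..N}. \<forall>x\<in>circle. \<forall>y\<in>circle.
                    \<rho> x y = s \<longrightarrow> \<rho> (h j x) (h j y) = s}"

text \<open>Phi(x) = mu([0,x]), viewed as a map of the circle (0 corresponds to the point 1).\<close>
definition Phi :: "complex measure \<Rightarrow> complex \<Rightarrow> complex" where
  "Phi \<mu> z = cis (2 * pi * measure \<mu> (arc 1 z))"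

end

theory Submission imports Defs "HOL-Complex_Analysis.Cauchy_Integral_Theorem" begin

definition ee :: "real \<Rightarrow> complex" where "ee t = cis (2*pi*t)"

lemma ee_circle[simp]: "ee t \<in> circle"
  by (simp add: ee_def)

lemma ee_add: "ee (s + t) = ee s * ee t"
  by (simp add: ee_def cis_mult distrib_left)

lemma ee_int: "ee (of_int k) = 1"
  unfolding ee_def
  by (metis cis_multiple_2pi mult.commute mult.left_commute of_real_of_int_eq Ints_of_int)

lemma ee_per: "ee (t + of_int k) = ee t"
  by (simp add: ee_add ee_int)

lemma ee_frac: "ee (frac t) = ee t"
  using ee_per[of "frac t" "\<lfloor>t\<rfloor>"] by (simp add: frac_def)

lemma frac_diff: "frac (u - v) = (if frac v \<le> frac u then frac u - frac v else frac u - frac v + 1)"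
proof -
  have a: "frac (u - v) = (if frac u + frac (-v) < 1 then frac u + frac (-v) else frac u + frac (- v) - 1)"
    using frac_add[of u "-v"] by simp
  have b: "frac (-v) = (if frac v = 0 then 0 else 1 - frac v)"
    using frac_neg[of v] frac_eq_0_iff[of v] by simp
  have "0 \<le> frac u" "frac u < 1" "0 \<le> frac v" "frac v < 1" by (auto simp: frac_lt_1)
  then show ?thesis unfolding a b by (cases "frac v = 0") (simp_all del: frac_eq_0_iff)
qed

lemma frac_small: "0 \<le> s \<Longrightarrow> s < 1 \<Longrightarrow> frac s = s"
  by (simp add: frac_eq)

lemma cpos_ee: "cpos (ee t) = frac t"
proof -
  define s where "s = frac t"
  have s0: "0 \<le> s" "s < 1" by (auto simp: s_def frac_lt_1)
  have "ee t = ee s" by (simp add: s_def ee_frac)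
  show ?thesis
  proof (cases "s \<le> 1/2")
    case True
    have "Arg (ee s) = 2 * pi * s" unfolding ee_def
    proof (rule Arg_cis)
      have "0 \<le> 2 * pi * s" using s0 pi_gt_zero by simp
      moreover have "2 * pi * s \<le> 2 * pi * (1/2)" using True pi_gt_zero by (intro mult_left_mono) auto
      moreover have "2 * pi * (1/2) = pi" by simp
      ultimately show "2 * pi * s \<in> {-pi<..pi}" unfolding greaterThanAtMost_iff using pi_gt_zero by linarith
    qed
    then have "cpos (ee s) = frac s" by (simp add: cpos_def)
    then show ?thesis using \<open>ee t = ee s\<close> s0 by (simp add: s_def)
  next
    case False
    have "ee s = ee (s - 1)" using ee_per[of "s-1" 1] by simp
    moreover have "Arg (ee (s-1)) = 2*pi*(s-1)" unfolding ee_def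
    proof (intro Arg_cis)
      have "pi * (2 * s - 1) > 0" using False pi_gt_zero by (intro mult_pos_pos) auto
      then have "2*pi*(s-1) > - pi" by (simp add: algebra_simps)
      moreover have "2*pi*(s-1) < 0" using s0 pi_gt_zero by (simp add: mult_pos_neg)
      ultimately show "2*pi*(s-1) \<in> {-pi<..pi}" unfolding greaterThanAtMost_iff using pi_gt_zero by linarith
    qed
    ultimately have "cpos (ee s) = frac (s - 1)" by (simp add: cpos_def)
    also have "\<dots> = s" using s0 False
      using frac_diff[of s 1] by (simp add: frac_small)
    finally show ?thesis using \<open>ee t = ee s\<close> by (simp add: s_def)
  qed
qed

lemma cpos_ge0: "0 \<le> cpos z" and cpos_lt1: "cpos z < 1"
  by (auto simp: cpos_def frac_lt_1)

lemma ee_cpos: assumes "z \<in> circle" shows "ee (cpos z) = z"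
proof -
  have "ee (cpos z) = ee (Arg z / (2*pi))" by (simp add: cpos_def ee_frac)
  also have "\<dots> = cis (Arg z)" by (simp add: ee_def)
  also have "\<dots> = z"
  proof -
    have "z \<noteq> 0" "norm z = 1" using assms by auto
    then show ?thesis by (simp add: cis_Arg sgn_div_norm)
  qed
  finally show ?thesis .
qed

lemma cpos_inj: assumes "z \<in> circle" "w \<in> circle" "cpos z = cpos w" shows "z = w"
proof -
  have "z = ee (cpos z)" using ee_cpos[OF assms(1)] by simp
  also have "\<dots> = ee (cpos w)" using assms(3) by simp
  also have "\<dots> = w" using ee_cpos[OF assms(2)] by simp
  finally show ?thesis .
qed

lemma cpos_1[simp]: "cpos 1 = 0"
  by (simp add: cpos_def)

lemma frac_cpos[simp]: "frac (cpos z) = cpos z"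
  using cpos_ge0 cpos_lt1 frac_small by blast

lemma fd: "frac (cpos a - cpos b) = (if cpos b \<le> cpos a then cpos a - cpos b else cpos a - cpos b + 1)"
  using frac_diff[of "cpos a" "cpos b"] by simp

lemma frac_frac_diff: "frac (frac a - b) = frac (a - b)"
  using frac_diff[of "frac a" b] frac_diff[of a b] by (simp add: frac_frac)

lemma cnj_ee: "cnj (ee t) = ee (- t)"
  by (simp add: ee_def cis_cnj)

lemma ee_half: "ee (1/2) = -1"
  by (simp add: ee_def)

lemma cpos_alt: assumes "z \<in> circle" "z \<noteq> 1" shows "cpos z = Arg (- z) / (2*pi) + 1/2"
proof -
  define t where "t = cpos z"
  have z: "z = ee t" using ee_cpos[OF assms(1)] unfolding t_def by simp
  have "t \<noteq> 0"
  proof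
    assume "t = 0" then have "z = ee 0" using z by simp
    then show False using assms by (simp add: ee_def)
  qed
  then have t0: "0 < t" using cpos_ge0[of z] t_def by linarith
  have t1: "t < 1" using cpos_lt1 t_def by simp
  have h: "ee (-1/2) = -1" by (simp add: ee_def complex_eq_iff)
  have "- z = ee (t - 1/2)" using z ee_add[of t "-1/2"] h by simp
  moreover have "Arg (ee (t - 1/2)) = 2*pi*(t - 1/2)" unfolding ee_def
  proof (rule Arg_cis)
    have "0 < pi * t" using t0 pi_gt_zero by (rule mult_pos_pos[rotated])
    moreover have "pi * t < pi * 1" using t1 pi_gt_zero by (intro mult_strict_left_mono)
    moreover have "2*pi*(t - 1/2) = 2*(pi*t) - pi" by (simp add: algebra_simps)
    ultimately show "2*pi*(t - 1/2) \<in> {-pi<..pi}" by simp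
  qed
  ultimately have "Arg (- z) = 2*pi*(t - 1/2)" by simp
  then have "Arg (- z) / (2*pi) = t - 1/2" using pi_gt_zero by simp
  then show ?thesis unfolding t_def by linarith
qed


lemma norm_ee[simp]: "norm (ee t) = 1"
  by (simp add: ee_def)

lemma nonpos_circle: assumes "z \<in> circle" "z \<noteq> 1" shows "- z \<notin> \<real>\<^sub>\<le>\<^sub>0"
proof
  assume "- z \<in> \<real>\<^sub>\<le>\<^sub>0"
  then obtain r where r: "- z = of_real r" "r \<le> 0" by (auto simp: nonpos_Reals_def)
  then have "z = of_real (- r)" by (metis minus_minus of_real_minus)
  moreover have "norm z = 1" using assms by simp
  ultimately have "- r = 1" using r(2) by simp
  then show False using \<open>z = of_real (- r)\<close> assms(2) by simp
qed

lemma cont_cpos: "continuous_on (circle - {1}) cpos"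
proof -
  have "continuous_on (circle - {1}) (\<lambda>z. Arg (- z) / (2*pi) + 1/2)"
  proof -
    have "continuous_on (circle - {1}) (\<lambda>z. Arg (- z))"
    proof (rule continuous_on_Arg')
      show "continuous_on (circle - {1}) (\<lambda>z. - z)" by (rule continuous_on_minus[OF continuous_on_id])
      show "\<And>z. z \<in> circle - {1} \<Longrightarrow> - z \<notin> \<real>\<^sub>\<le>\<^sub>0" using nonpos_circle by blast
    qed
    then show ?thesis by (intro continuous_on_add continuous_on_divide continuous_on_const) auto
  qed
  then show ?thesis
    by (rule continuous_on_cong[THEN iffD1, rotated 2]) (auto simp: cpos_alt)
qed

lemma ee_diff: "z \<in> circle \<Longrightarrow> c \<in> circle \<Longrightarrow> z * cnj c = ee (cpos z - cpos c)"
  using ee_add[of "cpos z" "- cpos c"] ee_cpos[of z] ee_cpos[of c] cnj_ee[of "cpos c"] by simp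

lemma cpos_rot: "z \<in> circle \<Longrightarrow> c \<in> circle \<Longrightarrow> cpos (z * cnj c) = frac (cpos z - cpos c)"
  by (simp add: ee_diff cpos_ee)

lemma rel_inj: assumes "z \<in> circle" "d \<in> circle" "frac (cpos z - cpos c) = frac (cpos d - cpos c)"
  shows "z = d"
proof -
  have "cpos z = cpos d" using assms(3) cpos_ge0[of z] cpos_lt1[of z] cpos_ge0[of d] cpos_lt1[of d]
    cpos_ge0[of c] cpos_lt1[of c] unfolding fd by (auto split: if_splits)
  then show ?thesis using assms cpos_inj by blast
qed

lemma cont_rel: assumes "c \<in> circle" shows "continuous_on (circle - {c}) (\<lambda>z. frac (cpos z - cpos c))"
proof -
  have "continuous_on (circle - {c}) (\<lambda>z. cpos (z * cnj c))"
  proof (rule continuous_on_compose2[OF cont_cpos])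
    show "continuous_on (circle - {c}) (\<lambda>z. z * cnj c)" by (intro continuous_intros)
    show "(\<lambda>z. z * cnj c) ` (circle - {c}) \<subseteq> circle - {1}"
    proof (rule image_subsetI)
      fix z assume "z \<in> circle - {c}"
      then have z: "z \<in> circle" "z \<noteq> c" by auto
      have "z * cnj c \<in> circle" using z assms by (simp add: norm_mult)
      moreover have "z * cnj c \<noteq> 1"
      proof
        assume "z * cnj c = 1"
        then have "frac (cpos z - cpos c) = frac (cpos c - cpos c)" using cpos_rot[OF z(1) assms] by simp
        then show False using rel_inj[OF z(1) assms] z(2) by blast
      qed
      ultimately show "z * cnj c \<in> circle - {1}" by simp
    qed
  qed
  moreover have "\<And>z. z \<in> circle - {c} \<Longrightarrow> cpos (z * cnj c) = frac (cpos z - cpos c)"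
    using cpos_rot assms by blast
  ultimately show ?thesis by (rule continuous_on_eq)
qed

lemma arc_sub: "arc x y \<subseteq> circle"
  by (auto simp: arc_def)

lemma arc_param: assumes "x \<in> circle"
  shows "arc x y = (\<lambda>s. ee (cpos x + s)) ` {0..frac (cpos y - cpos x)}"
proof
  show "arc x y \<subseteq> (\<lambda>s. ee (cpos x + s)) ` {0..frac (cpos y - cpos x)}"
  proof
    fix z assume z: "z \<in> arc x y"
    then have zc: "z \<in> circle" by (simp add: arc_def)
    define s where "s = frac (cpos z - cpos x)"
    have "ee (cpos x + s) = ee (cpos x) * ee (frac (cpos z - cpos x))" by (simp add: s_def ee_add)
    also have "\<dots> = ee (cpos x + (cpos z - cpos x))" by (simp only: ee_frac ee_add)
    also have "\<dots> = z" using ee_cpos[OF zc] by simp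
    finally have "z = ee (cpos x + s)" by simp
    moreover have "s \<in> {0..frac (cpos y - cpos x)}" using z by (simp add: s_def arc_def)
    ultimately show "z \<in> (\<lambda>s. ee (cpos x + s)) ` {0..frac (cpos y - cpos x)}" by blast
  qed
  show "(\<lambda>s. ee (cpos x + s)) ` {0..frac (cpos y - cpos x)} \<subseteq> arc x y"
  proof (rule image_subsetI)
    fix s assume "s \<in> {0..frac (cpos y - cpos x)}"
    then have s: "0 \<le> s" "s \<le> frac (cpos y - cpos x)" by auto
    have s1: "s < 1" using s(2) frac_lt_1[of "cpos y - cpos x"] by linarith
    have "frac (cpos (ee (cpos x + s)) - cpos x) = frac (frac (cpos x + s) - cpos x)" by (simp add: cpos_ee)
    also have "\<dots> = frac s" by (simp add: frac_frac_diff)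
    also have "\<dots> = s" using s s1 by (simp add: frac_small)
    finally show "ee (cpos x + s) \<in> arc x y" using s by (simp add: arc_def)
  qed
qed

lemma connected_arc: "x \<in> circle \<Longrightarrow> connected (arc x y)"
  unfolding arc_param by (intro connected_continuous_image) (auto simp: ee_def intro!: continuous_intros)

lemma compact_arc: "x \<in> circle \<Longrightarrow> compact (arc x y)"
  unfolding arc_param by (intro compact_continuous_image) (auto simp: ee_def intro!: continuous_intros)

lemma left_in_arc: "x \<in> circle \<Longrightarrow> x \<in> arc x y"
  by (simp add: arc_def)

lemma right_in_arc: "y \<in> circle \<Longrightarrow> y \<in> arc x y"
  by (simp add: arc_def)

lemma arc_self: assumes "x \<in> circle" shows "arc x x = {x}"
proof -
  have "z = x" if "z \<in> circle" "frac (cpos z - cpos x) \<le> 0" for z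
  proof -
    have "frac (cpos z - cpos x) = frac (cpos x - cpos x)" using that(2) frac_ge_0[of "cpos z - cpos x"] by simp
    then show ?thesis using rel_inj[OF that(1) assms] by blast
  qed
  then show ?thesis using assms by (auto simp: arc_def)
qed

lemma connected_arc_cases:
  assumes C: "C \<subseteq> circle" "connected C" "a \<in> C" "b \<in> C"
  shows "arc a b \<subseteq> C \<or> arc b a \<subseteq> C"
proof (rule ccontr)
  assume "\<not> ?thesis"
  then obtain c d where c: "c \<in> arc a b" "c \<notin> C" and d: "d \<in> arc b a" "d \<notin> C" by auto
  have cc: "c \<in> circle" "d \<in> circle" using c d by (auto simp: arc_def)
  have ab: "a \<in> circle" "b \<in> circle" using C by auto
  define \<phi> where "\<phi> = (\<lambda>z. frac (cpos z - cpos c))"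
  have "continuous_on C \<phi>" using cont_rel[OF cc(1)] C c unfolding \<phi>_def
    by (auto intro: continuous_on_subset)
  hence conn: "connected (\<phi> ` C)" using C(2) connected_continuous_image by blast
  have ne: "cpos c \<noteq> cpos a" "cpos c \<noteq> cpos b" "cpos d \<noteq> cpos a" "cpos d \<noteq> cpos b"
    using cpos_inj[OF cc(1) ab(1)] cpos_inj[OF cc(1) ab(2)] cpos_inj[OF cc(2) ab(1)] cpos_inj[OF cc(2) ab(2)]
      C(3,4) c(2) d(2) by auto
  have r: "0 \<le> cpos a" "cpos a < 1" "0 \<le> cpos b" "cpos b < 1" "0 \<le> cpos c" "cpos c < 1" "0 \<le> cpos d" "cpos d < 1"
    by (auto simp: cpos_ge0 cpos_lt1)
  have h1: "frac (cpos c - cpos a) \<le> frac (cpos b - cpos a)" using c by (simp add: arc_def)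
  have h2: "frac (cpos d - cpos b) \<le> frac (cpos a - cpos b)" using d by (simp add: arc_def)
  have ineq: "\<phi> b \<le> \<phi> d \<and> \<phi> d \<le> \<phi> a"
    using h1 h2 ne r unfolding \<phi>_def fd by (auto split: if_splits)
  have "\<phi> d \<in> \<phi> ` C" using conn ineq C(3,4) unfolding connected_iff_interval by blast
  then obtain z where z: "z \<in> C" "\<phi> z = \<phi> d" by auto
  then have "z = d" using rel_inj[of z d c] C cc unfolding \<phi>_def by auto
  then show False using z d by simp
qed

lemma arc_union: assumes "x \<in> circle" "y \<in> circle" "x \<noteq> y" shows "arc x y \<union> arc y x = circle"
proof -
  have ne: "cpos x \<noteq> cpos y" using assms cpos_inj by blast
  have "frac (cpos z - cpos x) \<le> frac (cpos y - cpos x) \<or> frac (cpos z - cpos y) \<le> frac (cpos x - cpos y)" for z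
    using ne cpos_ge0[of x] cpos_lt1[of x] cpos_ge0[of y] cpos_lt1[of y] cpos_ge0[of z] cpos_lt1[of z]
    unfolding fd by (auto split: if_splits)
  then show ?thesis by (auto simp: arc_def)
qed

lemma arc_inter: assumes "x \<in> circle" "y \<in> circle" shows "arc x y \<inter> arc y x \<subseteq> {x, y}"
proof
  fix z assume z: "z \<in> arc x y \<inter> arc y x"
  then have zc: "z \<in> circle" by (simp add: arc_def)
  have "cpos z = cpos x \<or> cpos z = cpos y"
    using z cpos_ge0[of x] cpos_lt1[of x] cpos_ge0[of y] cpos_lt1[of y] cpos_ge0[of z] cpos_lt1[of z]
    unfolding arc_def fd by (auto split: if_splits)
  then show "z \<in> {x, y}" using cpos_inj zc assms by auto
qed

lemma arc_le: assumes "cpos u \<le> cpos v"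
  shows "arc u v = {z \<in> circle. cpos u \<le> cpos z \<and> cpos z \<le> cpos v}"
proof -
  have "frac (cpos z - cpos u) \<le> frac (cpos v - cpos u) \<longleftrightarrow> cpos u \<le> cpos z \<and> cpos z \<le> cpos v" for z
    using assms cpos_ge0[of u] cpos_lt1[of u] cpos_ge0[of v] cpos_lt1[of v] cpos_ge0[of z] cpos_lt1[of z]
    unfolding fd by auto
  then show ?thesis by (auto simp: arc_def)
qed

lemma arc_1: "arc 1 v = {z \<in> circle. cpos z \<le> cpos v}"
  using arc_le[of 1 v] cpos_ge0 by auto


locale S1 =
  fixes N :: nat and f :: "nat \<Rightarrow> complex \<Rightarrow> complex" and p :: "nat \<Rightarrow> real"
    and \<mu> :: "complex measure"
  assumes homeo: "\<forall>j\<in>{1..N}. \<exists>g. homeomorphism circle circle (f j) g"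
    and p_pos: "\<forall>j\<in>{1..N}. p j > 0"
    and p_sum: "(\<Sum>j=1..N. p j) = 1"
    and bmin: "backward_minimal N f"
    and inv: "invariant_measure N (inverse_family f) p \<mu>"
begin

abbreviation "h \<equiv> inverse_family f"

lemma prob: "prob_space \<mu>" using inv by (simp add: invariant_measure_def)

sublocale prob_space \<mu> by (rule prob)

lemma sets_mu: "sets \<mu> = sets (restrict_space borel circle)"
  using inv by (simp add: invariant_measure_def)

lemma space_mu[simp]: "space \<mu> = circle"
  using sets_eq_imp_space_eq[OF sets_mu] by (simp add: space_restrict_space)

lemma borel_in: "S \<in> sets borel \<Longrightarrow> S \<subseteq> circle \<Longrightarrow> S \<in> sets \<mu>"
  unfolding sets_mu by (subst sets_restrict_space_iff) auto

lemma closed_in: "closed S \<Longrightarrow> S \<subseteq> circle \<Longrightarrow> S \<in> sets \<mu>"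
  by (intro borel_in) auto

lemma openin_in: assumes "openin (top_of_set circle) U" shows "U \<in> sets \<mu>"
proof -
  obtain T where T: "open T" "U = circle \<inter> T" using assms by (auto simp: openin_open)
  then show ?thesis by (intro borel_in) auto
qed

lemma sets_sub: "E \<in> sets \<mu> \<Longrightarrow> E \<subseteq> circle"
  using sets.sets_into_space by fastforce

lemma inv_eq: "E \<in> sets \<mu> \<Longrightarrow> measure \<mu> E = (\<Sum>j=1..N. p j * measure \<mu> (h j -` E \<inter> circle))"
  using inv by (simp add: invariant_measure_def)

lemma homeo_h: assumes j: "j \<in> {1..N}" shows "homeomorphism circle circle (f j) (h j)"
proof -
  obtain g where g: "homeomorphism circle circle (f j) g" using homeo j by blast
  have inj: "inj_on (f j) circle" using g by (metis homeomorphism_apply1 inj_on_inverseI)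
  have "h j y = g y" if "y \<in> circle" for y
  proof -
    have "g y \<in> circle" using homeomorphism_image2[OF g] that by blast
    moreover have "f j (g y) = y" using homeomorphism_apply2[OF g that] .
    ultimately show ?thesis unfolding inverse_family_def using inj by (intro inv_into_f_eq) auto
  qed
  then show ?thesis by (intro homeomorphism_cong[OF g]) auto
qed

lemma f_circle: "j \<in> {1..N} \<Longrightarrow> x \<in> circle \<Longrightarrow> f j x \<in> circle"
  using homeo_h homeomorphism_image1 by blast

lemma h_circle: "j \<in> {1..N} \<Longrightarrow> x \<in> circle \<Longrightarrow> h j x \<in> circle"
  using homeo_h homeomorphism_image2 by blast

lemma hf: "j \<in> {1..N} \<Longrightarrow> x \<in> circle \<Longrightarrow> h j (f j x) = x"
  using homeo_h homeomorphism_apply1 by blast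

lemma fh: "j \<in> {1..N} \<Longrightarrow> x \<in> circle \<Longrightarrow> f j (h j x) = x"
  using homeo_h homeomorphism_apply2 by blast

lemma f_inj: "j \<in> {1..N} \<Longrightarrow> inj_on (f j) circle"
  by (metis hf inj_on_inverseI)

lemma pre_eq: assumes "j \<in> {1..N}" "E \<subseteq> circle" shows "h j -` E \<inter> circle = f j ` E"
proof
  show "h j -` E \<inter> circle \<subseteq> f j ` E"
  proof
    fix z assume "z \<in> h j -` E \<inter> circle"
    then show "z \<in> f j ` E" using fh[OF assms(1)] by (metis IntD1 IntD2 image_eqI vimageE)
  qed
  show "f j ` E \<subseteq> h j -` E \<inter> circle"
    using assms f_circle hf by auto
qed

lemma inv_eq': "E \<in> sets \<mu> \<Longrightarrow> measure \<mu> E = (\<Sum>j=1..N. p j * measure \<mu> (f j ` E))"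
  using inv_eq[of E] pre_eq sets_sub by simp

lemma point_in: "x \<in> circle \<Longrightarrow> {x} \<in> sets \<mu>"
  by (intro closed_in) auto

lemma point_eq: assumes "x \<in> circle" shows "measure \<mu> {x} = (\<Sum>j=1..N. p j * measure \<mu> {f j x})"
  using inv_eq'[OF point_in[OF assms]] by simp

lemma finite_atoms: assumes "\<epsilon> > 0" shows "finite {x \<in> circle. measure \<mu> {x} \<ge> \<epsilon>}"
proof (rule ccontr)
  let ?B = "{x \<in> circle. measure \<mu> {x} \<ge> \<epsilon>}"
  assume "infinite ?B"
  obtain n :: nat where n: "real n > 1 / \<epsilon>" using reals_Archimedean2 by blast
  obtain S where S: "S \<subseteq> ?B" "finite S" "card S = n"
    using infinite_arbitrarily_large[OF \<open>infinite ?B\<close>] by blast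
  have "measure \<mu> S = (\<Sum>x\<in>S. measure \<mu> {x})"
    using S point_in by (intro measure_eq_sum_singleton) auto
  also have "\<dots> \<ge> (\<Sum>x\<in>S. \<epsilon>)" using S by (intro sum_mono) auto
  finally have "measure \<mu> S \<ge> real n * \<epsilon>" using S by simp
  moreover have "real n * \<epsilon> > 1" using n assms by (simp add: field_simps)
  moreover have "measure \<mu> S \<le> 1" by (rule prob_le_1)
  ultimately show False by linarith
qed

lemma circle_infinite: "infinite circle"
proof
  assume "finite circle"
  have "inj_on ee {0..<1}"
    by (rule inj_on_inverseI[where g = cpos]) (simp add: cpos_ee frac_small)
  moreover have "ee ` {0..<1} \<subseteq> circle" by auto
  ultimately have "finite {0..<(1::real)}"
    using \<open>finite circle\<close> finite_imageD finite_subset by metis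
  then show False using infinite_Ico[of "0::real" 1] by simp
qed

lemma Zorb_circle: assumes "x \<in> circle" "\<forall>k. \<omega> k \<in> {1..N}" shows "Zorb h n x \<omega> \<in> circle"
proof (induction n)
  case 0 then show ?case using assms by simp
next
  case (Suc n) then show ?case unfolding Zorb.simps using assms(2) by (intro h_circle) auto
qed

lemma minimal: "openin (top_of_set circle) U \<Longrightarrow> U \<noteq> {} \<Longrightarrow> x \<in> circle \<Longrightarrow>
   \<exists>n \<omega>. (\<forall>k. \<omega> k \<in> {1..N}) \<and> Zorb h n x \<omega> \<in> U"
  using bmin unfolding backward_minimal_def forward_minimal_def by blast

lemma no_atoms: "measure \<mu> {x} = 0"
proof (rule ccontr)
  assume "measure \<mu> {x} \<noteq> 0"
  have xc: "x \<in> circle"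
  proof (rule ccontr)
    assume "x \<notin> circle"
    then have "{x} \<notin> sets \<mu>" using sets_sub by blast
    then show False using measure_notin_sets[of "{x}" \<mu>] \<open>measure \<mu> {x} \<noteq> 0\<close> by simp
  qed
  have "measure \<mu> {x} > 0" using \<open>measure \<mu> {x} \<noteq> 0\<close> measure_nonneg[of \<mu> "{x}"] by linarith
  note x = xc this
  define B where "B = {z \<in> circle. measure \<mu> {z} \<ge> measure \<mu> {x}}"
  have Bfin: "finite B" using finite_atoms[OF x(2)] by (simp add: B_def)
  have xB: "x \<in> B" using x by (simp add: B_def)
  define m where "m = Max ((\<lambda>z. measure \<mu> {z}) ` B)"
  have mB: "m \<in> (\<lambda>z. measure \<mu> {z}) ` B" unfolding m_def using Bfin xB by (intro Max_in) auto
  then obtain x0 where x0: "x0 \<in> B" "measure \<mu> {x0} = m" by auto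
  have mx: "m \<ge> measure \<mu> {x}" using x0 by (simp add: B_def)
  have le_m: "measure \<mu> {z} \<le> m" for z
  proof (cases "z \<in> B")
    case True then show ?thesis unfolding m_def using Bfin by (intro Max_ge) auto
  next
    case False
    show ?thesis
    proof (cases "z \<in> circle")
      case True then show ?thesis using False mx by (simp add: B_def)
    next
      case False
      then have "{z} \<notin> sets \<mu>" using sets_sub[of "{z}"] by blast
      then have "measure \<mu> {z} = 0" by (rule measure_notin_sets)
      then show ?thesis using mx x(2) by simp
    qed
  qed
  define A where "A = {z \<in> circle. measure \<mu> {z} = m}"
  have AB: "A \<subseteq> B" using mx by (auto simp: A_def B_def)
  have Afin: "finite A" using finite_subset[OF AB Bfin] .
  have x0A: "x0 \<in> A" using x0 by (simp add: A_def B_def)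
  have fA: "f j z \<in> A" if "z \<in> A" "j \<in> {1..N}" for z j
  proof -
    have zc: "z \<in> circle" and zm: "measure \<mu> {z} = m" using that by (auto simp: A_def)
    have "(\<Sum>i=1..N. p i * (m - measure \<mu> {f i z})) = m * (\<Sum>i=1..N. p i) - (\<Sum>i=1..N. p i * measure \<mu> {f i z})"
      by (simp add: algebra_simps sum_subtractf sum_distrib_left)
    also have "\<dots> = 0" using p_sum point_eq[OF zc] zm by simp
    finally have s0: "(\<Sum>i=1..N. p i * (m - measure \<mu> {f i z})) = 0" .
    have "\<forall>i\<in>{1..N}. p i * (m - measure \<mu> {f i z}) = 0"
    proof -
      have "\<And>i. i \<in> {1..N} \<Longrightarrow> 0 \<le> p i" using p_pos by (simp add: less_imp_le)
      then have nn: "\<And>i. i \<in> {1..N} \<Longrightarrow> 0 \<le> p i * (m - measure \<mu> {f i z})" using le_m by (auto intro!: mult_nonneg_nonneg)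
      have "(\<Sum>i=1..N. p i * (m - measure \<mu> {f i z})) = 0 \<longleftrightarrow> (\<forall>i\<in>{1..N}. p i * (m - measure \<mu> {f i z}) = 0)"
        using nn by (intro sum_nonneg_eq_0_iff) auto
      with s0 show ?thesis by blast
    qed
    then have "p j * (m - measure \<mu> {f j z}) = 0" using that(2) by blast
    moreover have "p j > 0" using p_pos that(2) by blast
    ultimately have "measure \<mu> {f j z} = m" by simp
    then show ?thesis using f_circle[OF that(2) zc] by (simp add: A_def)
  qed
  have hA: "h j z \<in> A" if "z \<in> A" "j \<in> {1..N}" for z j
  proof -
    have sub: "f j ` A \<subseteq> A" using fA that(2) by blast
    have "A \<subseteq> circle" by (auto simp: A_def)
    then have "inj_on (f j) A" using f_inj[OF that(2)] inj_on_subset by blast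
    then have "f j ` A = A" using endo_inj_surj[OF Afin sub] by blast
    then have "z \<in> f j ` A" using that(1) by simp
    then obtain y where "y \<in> A" "z = f j y" by (rule imageE) simp
    moreover have "y \<in> circle" using \<open>y \<in> A\<close> by (simp add: A_def)
    ultimately show ?thesis using hf[OF that(2)] by simp
  qed
  have orb: "Zorb h n x0 \<omega> \<in> A" if "\<forall>k. \<omega> k \<in> {1..N}" for n \<omega>
  proof (induction n)
    case 0 then show ?case using x0A by simp
  next
    case (Suc n) then show ?case unfolding Zorb.simps using that by (intro hA) auto
  qed
  have "openin (top_of_set circle) (circle - A)"
  proof (intro openin_diff)
    have "A \<subseteq> circle" by (auto simp: A_def)
    then show "closedin (top_of_set circle) A" using Afin by (intro closed_subset finite_imp_closed)
  qed auto
  moreover have "circle - A \<noteq> {}"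
  proof
    assume "circle - A = {}"
    then have "circle \<subseteq> A" by blast
    then show False using circle_infinite Afin finite_subset by blast
  qed
  moreover have "x0 \<in> circle" using x0A by (simp add: A_def)
  ultimately obtain n \<omega> where "\<forall>k. \<omega> k \<in> {1..N}" "Zorb h n x0 \<omega> \<in> circle - A"
    using minimal[of "circle - A" x0] by blast
  then show False using orb by blast
qed

end

context S1 begin

lemma null_pull: assumes "openin (top_of_set circle) V" "measure \<mu> V = 0" "j \<in> {1..N}"
  shows "openin (top_of_set circle) (h j -` V \<inter> circle) \<and> measure \<mu> (h j -` V \<inter> circle) = 0"
proof
  have "h j \<in> circle \<rightarrow> circle" by (rule Pi_I) (rule h_circle[OF assms(3)])
  then have "openin (top_of_set circle) (circle \<inter> h j -` V)"
    using homeomorphism_cont2[OF homeo_h[OF assms(3)]] assms(1) by (intro continuous_openin_preimage)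
  then show "openin (top_of_set circle) (h j -` V \<inter> circle)" by (simp add: Int_commute)
  have Vm: "V \<in> sets \<mu>" using openin_in[OF assms(1)] .
  have nn: "\<And>i. i \<in> {1..N} \<Longrightarrow> 0 \<le> p i * measure \<mu> (h i -` V \<inter> circle)"
    using p_pos by (simp add: less_imp_le)
  have "(\<Sum>i=1..N. p i * measure \<mu> (h i -` V \<inter> circle)) = 0" using inv_eq[OF Vm] assms(2) by simp
  moreover have "(\<Sum>i=1..N. p i * measure \<mu> (h i -` V \<inter> circle)) = 0 \<longleftrightarrow>
      (\<forall>i\<in>{1..N}. p i * measure \<mu> (h i -` V \<inter> circle) = 0)"
    using nn by (intro sum_nonneg_eq_0_iff) auto
  ultimately have "p j * measure \<mu> (h j -` V \<inter> circle) = 0" using assms(3) by blast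
  moreover have "p j > 0" using p_pos assms(3) by blast
  ultimately show "measure \<mu> (h j -` V \<inter> circle) = 0" by simp
qed

lemma null_orbit: assumes "\<forall>k. \<omega> k \<in> {1..N}"
  shows "openin (top_of_set circle) V \<Longrightarrow> measure \<mu> V = 0 \<Longrightarrow>
    openin (top_of_set circle) {x\<in>circle. Zorb h n x \<omega> \<in> V} \<and> measure \<mu> {x\<in>circle. Zorb h n x \<omega> \<in> V} = 0"
proof (induction n arbitrary: V)
  case 0
  have "V \<subseteq> circle" using 0(1) by (rule openin_imp_subset)
  then have "{x\<in>circle. Zorb h 0 x \<omega> \<in> V} = V" by auto
  then show ?case using 0 by simp
next
  case (Suc n)
  define j where "j = \<omega> (Suc n)"
  have j: "j \<in> {1..N}" using assms by (simp add: j_def)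
  define V' where "V' = h j -` V \<inter> circle"
  have V': "openin (top_of_set circle) V'" "measure \<mu> V' = 0"
    using null_pull[OF Suc.prems j] by (auto simp: V'_def)
  have "{x\<in>circle. Zorb h (Suc n) x \<omega> \<in> V} = {x\<in>circle. Zorb h n x \<omega> \<in> V'}"
    using Zorb_circle[OF _ assms] by (auto simp: V'_def j_def)
  then show ?case using Suc.IH[OF V'] by simp
qed

lemma full_support: assumes "openin (top_of_set circle) U" "U \<noteq> {}" shows "measure \<mu> U > 0"
proof (rule ccontr)
  assume "\<not> measure \<mu> U > 0"
  then have U0: "measure \<mu> U = 0" using measure_nonneg[of \<mu> U] by linarith
  define \<T> where "\<T> = {T. open T \<and> measure \<mu> (circle \<inter> T) = 0}"
  have cover: "circle \<subseteq> \<Union>\<T>"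
  proof
    fix x :: complex assume x: "x \<in> circle"
    obtain n \<omega> where \<omega>: "\<forall>k. \<omega> k \<in> {1..N}" "Zorb h n x \<omega> \<in> U" using minimal[OF assms x] by blast
    let ?W = "{y\<in>circle. Zorb h n y \<omega> \<in> U}"
    have W: "openin (top_of_set circle) ?W" "measure \<mu> ?W = 0"
      using null_orbit[OF \<omega>(1) assms(1) U0] by auto
    obtain T where T: "open T" "?W = circle \<inter> T" using W(1) by (auto simp: openin_open)
    have "T \<in> \<T>" using T W(2) by (simp add: \<T>_def)
    moreover have "x \<in> T" using T(2) x \<omega>(2) by blast
    ultimately show "x \<in> \<Union>\<T>" by blast
  qed
  obtain \<T>' where T': "\<T>' \<subseteq> \<T>" "finite \<T>'" "circle \<subseteq> \<Union>\<T>'"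
    using compactE[OF compact_sphere cover] \<T>_def by blast
  have "circle = (\<Union>T\<in>\<T>'. circle \<inter> T)" using T'(3) by blast
  moreover have "measure \<mu> (\<Union>T\<in>\<T>'. circle \<inter> T) \<le> (\<Sum>T\<in>\<T>'. measure \<mu> (circle \<inter> T))"
  proof (rule measure_UNION_le[OF T'(2)])
    fix T assume "T \<in> \<T>'"
    then have "open T" using T'(1) \<T>_def by auto
    then show "circle \<inter> T \<in> sets \<mu>" by (intro borel_in) auto
  qed
  ultimately have "measure \<mu> circle \<le> (\<Sum>T\<in>\<T>'. measure \<mu> (circle \<inter> T))" by simp
  also have "\<dots> = 0" using T'(1) by (intro sum.neutral) (auto simp: \<T>_def)
  finally show False using prob_space by simp
qed

lemma pos_interval: assumes "0 \<le> a" "a < b" "b \<le> 1"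
  shows "measure \<mu> {z\<in>circle. a < cpos z \<and> cpos z < b} > 0"
proof (rule full_support)
  have "openin (top_of_set (circle - {1})) ((circle - {1}) \<inter> cpos -` {a<..<b})"
    by (rule continuous_openin_preimage_gen[OF cont_cpos open_greaterThanLessThan])
  moreover have "(circle - {1}) \<inter> cpos -` {a<..<b} = {z\<in>circle. a < cpos z \<and> cpos z < b}"
    using assms by auto
  ultimately have o1: "openin (top_of_set (circle - {1})) {z\<in>circle. a < cpos z \<and> cpos z < b}" by simp
  have o2: "openin (top_of_set circle) (circle - {1})"
    by (intro openin_diff) (auto intro: closed_subset)
  show "openin (top_of_set circle) {z\<in>circle. a < cpos z \<and> cpos z < b}"
    using openin_trans[OF o1 o2] .
  have "cpos (ee ((a+b)/2)) = (a+b)/2" using assms by (simp add: cpos_ee frac_small)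
  then have "ee ((a+b)/2) \<in> {z\<in>circle. a < cpos z \<and> cpos z < b}" using assms by simp
  then show "{z\<in>circle. a < cpos z \<and> cpos z < b} \<noteq> {}" by blast
qed

end

lemma Arg_borel: "Arg \<in> borel_measurable borel"
proof -
  have "(\<lambda>z. if z = 0 then 0 else Im (Ln z)) \<in> borel_measurable borel" by measurable
  moreover have "Arg = (\<lambda>z. if z = 0 then 0 else Im (Ln z))" by (auto simp: fun_eq_iff Arg_def)
  ultimately show ?thesis by simp
qed

lemma frac_borel: "(frac :: real \<Rightarrow> real) \<in> borel_measurable borel"
proof -
  have "(\<lambda>x::real. x - real_of_int \<lfloor>x\<rfloor>) \<in> borel_measurable borel"
    by (intro borel_measurable_diff borel_measurable_real_floor measurable_ident_sets) auto
  moreover have "frac = (\<lambda>x::real. x - real_of_int \<lfloor>x\<rfloor>)" by (auto simp: fun_eq_iff frac_def)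
  ultimately show ?thesis by simp
qed

lemma cpos_borel: "cpos \<in> borel_measurable borel"
proof -
  have "(\<lambda>z. Arg z / (2*pi)) \<in> borel_measurable borel"
    using Arg_borel by (intro borel_measurable_divide) auto
  then have "(\<lambda>z. frac (Arg z / (2*pi))) \<in> borel_measurable borel"
    by (rule measurable_compose[OF _ frac_borel])
  then show ?thesis by (simp add: cpos_def[abs_def])
qed

definition Dc :: "real \<Rightarrow> real \<Rightarrow> real" where "Dc a b = min \<bar>b - a\<bar> (1 - \<bar>b - a\<bar>)"

context S1 begin

lemma cpos_meas: "cpos \<in> borel_measurable \<mu>"
proof -
  have "cpos \<in> borel_measurable (restrict_space borel circle)"
    using cpos_borel by (rule measurable_restrict_space1)
  then show ?thesis by (subst measurable_cong_sets[OF sets_mu refl])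
qed

definition C :: "real \<Rightarrow> real" where "C t = measure \<mu> {z\<in>circle. cpos z \<le> t}"

definition \<nu> :: "real measure" where "\<nu> = distr \<mu> borel cpos"

lemma nu_real: "real_distribution \<nu>"
  unfolding \<nu>_def using cpos_meas by (intro real_distribution_distr) simp

lemma set_le_in: "{z\<in>circle. cpos z \<le> t} \<in> sets \<mu>"
proof -
  have "cpos -` {..t} \<inter> space \<mu> \<in> sets \<mu>" by (rule measurable_sets[OF cpos_meas]) simp
  moreover have "cpos -` {..t} \<inter> space \<mu> = {z\<in>circle. cpos z \<le> t}" by auto
  ultimately show ?thesis by simp
qed

lemma C_cdf: "C = cdf \<nu>"
proof
  fix t
  have "cdf \<nu> t = measure \<nu> {..t}" by (simp add: cdf_def)
  also have "\<dots> = measure \<mu> (cpos -` {..t} \<inter> space \<mu>)"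
    unfolding \<nu>_def using cpos_meas by (intro measure_distr) auto
  also have "cpos -` {..t} \<inter> space \<mu> = {z\<in>circle. cpos z \<le> t}" by auto
  finally show "C t = cdf \<nu> t" by (simp add: C_def)
qed

lemma null_finite: "finite S \<Longrightarrow> measure \<mu> S = 0"
proof (induction S rule: finite_induct)
  case empty then show ?case by simp
next
  case (insert x S)
  have "measure \<mu> (insert x S) \<le> measure \<mu> {x} + measure \<mu> S"
  proof (cases "insert x S \<subseteq> circle")
    case True
    then have "{x} \<in> sets \<mu>" "S \<in> sets \<mu>" using insert(1) by (auto intro!: closed_in finite_imp_closed)
    then show ?thesis using measure_Un_le[of "{x}" \<mu> S] by simp
  next
    case False
    then have "insert x S \<notin> sets \<mu>" using sets_sub by blast
    then show ?thesis using measure_notin_sets[of "insert x S" \<mu>] no_atoms insert(3) by simp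
  qed
  then show ?case using no_atoms insert(3) measure_nonneg[of \<mu> "insert x S"] by simp
qed

lemma C_cont: "isCont C t"
proof -
  interpret nu: real_distribution \<nu> by (rule nu_real)
  have "measure \<nu> {t} = measure \<mu> (cpos -` {t} \<inter> space \<mu>)"
    unfolding \<nu>_def using cpos_meas by (intro measure_distr) auto
  also have "\<dots> \<le> measure \<mu> {ee t}"
  proof (rule finite_measure_mono)
    show "cpos -` {t} \<inter> space \<mu> \<subseteq> {ee t}" using ee_cpos by auto
    show "{ee t} \<in> sets \<mu>" by (rule point_in) simp
  qed
  also have "\<dots> = 0" by (rule no_atoms)
  finally have "measure \<nu> {t} = 0" using measure_nonneg[of \<nu> "{t}"] by linarith
  then show ?thesis unfolding C_cdf by (simp add: nu.isCont_cdf)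
qed

lemma C_mono: "s \<le> t \<Longrightarrow> C s \<le> C t"
  unfolding C_def by (intro finite_measure_mono set_le_in) auto

lemma C0: "C 0 = 0"
proof -
  have "{z\<in>circle. cpos z \<le> 0} \<subseteq> {1}"
  proof
    fix z assume z: "z \<in> {z\<in>circle. cpos z \<le> 0}"
    then have "cpos z = cpos 1" using cpos_ge0[of z] by simp
    then show "z \<in> {1}" using z cpos_inj[of z 1] by simp
  qed
  then have "C 0 \<le> measure \<mu> {1}" unfolding C_def by (intro finite_measure_mono point_in) auto
  then show ?thesis using no_atoms[of 1] measure_nonneg[of \<mu>] unfolding C_def by (metis antisym)
qed

lemma C1: "C 1 = 1"
proof -
  have eq: "{z\<in>circle. cpos z \<le> 1} = space \<mu>" using cpos_lt1 less_imp_le by auto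
  show ?thesis unfolding C_def eq by (rule prob_space)
qed

lemma C_diff: assumes "a \<le> b" shows "measure \<mu> {z\<in>circle. a < cpos z \<and> cpos z \<le> b} = C b - C a"
proof -
  have eq: "{z\<in>circle. a < cpos z \<and> cpos z \<le> b} = {z\<in>circle. cpos z \<le> b} - {z\<in>circle. cpos z \<le> a}" by auto
  have sub: "{z\<in>circle. cpos z \<le> a} \<subseteq> {z\<in>circle. cpos z \<le> b}" using assms by auto
  show ?thesis unfolding C_def eq by (rule finite_measure_Diff[OF set_le_in set_le_in sub])
qed

lemma C_strict: assumes "0 \<le> a" "a < b" "b \<le> 1" shows "C a < C b"
proof -
  have "0 < measure \<mu> {z\<in>circle. a < cpos z \<and> cpos z < b}" by (rule pos_interval[OF assms])
  also have "\<dots> \<le> measure \<mu> {z\<in>circle. a < cpos z \<and> cpos z \<le> b}"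
  proof (rule finite_measure_mono)
    have "{z\<in>circle. a < cpos z \<and> cpos z \<le> b} = {z\<in>circle. cpos z \<le> b} - {z\<in>circle. cpos z \<le> a}" by auto
    then show "{z\<in>circle. a < cpos z \<and> cpos z \<le> b} \<in> sets \<mu>" by (simp only:) (rule sets.Diff[OF set_le_in set_le_in])
  qed auto
  also have "\<dots> = C b - C a" using assms by (intro C_diff) simp
  finally show ?thesis by simp
qed

definition A :: "complex \<Rightarrow> real" where "A u = measure \<mu> (arc 1 u)"

lemma A_C: "A u = C (cpos u)"
  unfolding A_def C_def arc_1 ..

lemma A_range: "0 \<le> A u" "A u < 1"
proof -
  show "0 \<le> A u" unfolding A_def by simp
  have "C (cpos u) < C 1" using cpos_ge0[of u] cpos_lt1[of u] by (intro C_strict) auto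
  then show "A u < 1" by (simp add: A_C C1)
qed

lemma A_inj: assumes "u \<in> circle" "v \<in> circle" "A u = A v" shows "u = v"
proof -
  have "cpos u = cpos v"
  proof (rule ccontr)
    assume ne: "cpos u \<noteq> cpos v"
    show False
    proof (cases "cpos u < cpos v")
      case True then have "C (cpos u) < C (cpos v)" using cpos_ge0[of u] cpos_lt1[of v] by (intro C_strict) auto
      then show False using assms(3) by (simp add: A_C)
    next
      case False then have "C (cpos v) < C (cpos u)" using ne cpos_ge0[of v] cpos_lt1[of u] by (intro C_strict) auto
      then show False using assms(3) by (simp add: A_C)
    qed
  qed
  then show ?thesis using cpos_inj assms by blast
qed

lemma arc_in: "x \<in> circle \<Longrightarrow> arc x y \<in> sets \<mu>"
  using compact_arc arc_sub by (intro closed_in) (auto simp: compact_imp_closed)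

lemma meas_arc: assumes "u \<in> circle" "cpos u \<le> cpos v"
  shows "measure \<mu> (arc u v) = A v - A u"
proof -
  let ?S = "{z\<in>circle. cpos u < cpos z \<and> cpos z \<le> cpos v}"
  have Sm: "?S \<in> sets \<mu>"
  proof -
    have "?S = {z\<in>circle. cpos z \<le> cpos v} - {z\<in>circle. cpos z \<le> cpos u}" by auto
    then show ?thesis by (simp only:) (rule sets.Diff[OF set_le_in set_le_in])
  qed
  have eq: "arc u v = ?S \<union> {u}"
  proof -
    have "z = u" if "z \<in> circle" "cpos z = cpos u" for z using that cpos_inj assms(1) by blast
    then show ?thesis unfolding arc_le[OF assms(2)] using assms by force
  qed
  have "measure \<mu> (arc u v) \<le> measure \<mu> ?S + measure \<mu> {u}"
    unfolding eq using Sm point_in[OF assms(1)] by (rule measure_Un_le)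
  moreover have "measure \<mu> ?S \<le> measure \<mu> (arc u v)"
  proof (rule finite_measure_mono[OF _ arc_in[OF assms(1)]])
    show "?S \<subseteq> arc u v" unfolding eq by blast
  qed
  moreover have "measure \<mu> ?S = A v - A u" using C_diff[OF assms(2)] by (simp add: A_C)
  ultimately show ?thesis using no_atoms[of u] by linarith
qed

lemma arc_sum: assumes "u \<in> circle" "v \<in> circle" "u \<noteq> v"
  shows "measure \<mu> (arc u v) + measure \<mu> (arc v u) = 1"
proof -
  have X: "arc u v \<in> sets \<mu>" and Y: "arc v u \<in> sets \<mu>" using assms arc_in by auto
  have "1 = measure \<mu> (arc u v \<union> arc v u)" using arc_union[OF assms] prob_space by simp
  also have "\<dots> = measure \<mu> (arc u v) + measure \<mu> (arc v u - arc u v)"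
    using X Y by (rule finite_measure_Union')
  also have "measure \<mu> (arc v u - arc u v) = measure \<mu> (arc v u) - measure \<mu> (arc v u \<inter> arc u v)"
    using Y X by (rule finite_measure_Diff')
  also have "measure \<mu> (arc v u \<inter> arc u v) = 0"
  proof -
    have "measure \<mu> (arc v u \<inter> arc u v) \<le> measure \<mu> {v, u}"
      using arc_inter[OF assms(2,1)] assms by (intro finite_measure_mono closed_in) auto
    then show ?thesis using null_finite[of "{v,u}"] measure_nonneg[of \<mu>] by (simp add: antisym)
  qed
  finally show ?thesis by simp
qed

definition rho :: "complex \<Rightarrow> complex \<Rightarrow> real" where
  "rho x y = min (measure \<mu> (arc x y)) (measure \<mu> (arc y x))"

lemma rho_sym: "rho x y = rho y x"
  by (simp add: rho_def min.commute)

lemma Dc_sym: "Dc a b = Dc b a"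
  by (simp add: Dc_def abs_minus_commute)

lemma key_le: assumes "u \<in> circle" "v \<in> circle" "cpos u \<le> cpos v" shows "rho u v = Dc (A u) (A v)"
proof (cases "u = v")
  case True
  then show ?thesis using assms by (simp add: rho_def Dc_def arc_self no_atoms)
next
  case False
  have m: "measure \<mu> (arc u v) = A v - A u" by (rule meas_arc[OF assms(1,3)])
  have "A u \<le> A v" using C_mono[OF assms(3)] by (simp add: A_C)
  then show ?thesis using arc_sum[OF assms(1,2) False] m by (simp add: rho_def Dc_def)
qed

lemma key: assumes "u \<in> circle" "v \<in> circle" shows "rho u v = Dc (A u) (A v)"
proof (cases "cpos u \<le> cpos v")
  case True then show ?thesis using key_le assms by blast
next
  case False then show ?thesis using key_le[OF assms(2,1)] rho_sym Dc_sym by simp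
qed

lemma Phi_ee: "Phi \<mu> u = ee (A u)"
  by (simp add: Phi_def ee_def A_def)

lemma cpos_Phi: "cpos (Phi \<mu> u) = A u"
  using A_range[of u] by (simp add: Phi_ee cpos_ee frac_small)

lemma keyid: assumes "u \<in> circle" "v \<in> circle" shows "dS (Phi \<mu> u) (Phi \<mu> v) = rho u v"
  using key[OF assms] by (simp add: dS_def Dc_def cpos_Phi)

end

lemma Dc_tri: assumes "0 \<le> a" "a < 1" "0 \<le> b" "b < 1" "0 \<le> c" "c < 1"
  shows "Dc a c \<le> Dc a b + Dc b c"
  using assms unfolding Dc_def by (auto simp: min_def abs_if)

lemma Dc_zero: assumes "0 \<le> a" "a < 1" "0 \<le> b" "b < 1" shows "Dc a b = 0 \<longleftrightarrow> a = b"
  using assms unfolding Dc_def by (auto simp: min_def abs_if)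

context S1 begin

lemma rho_nonneg: "0 \<le> rho x y"
  by (simp add: rho_def)

lemma metric: "Metric_space circle rho"
proof
  show "\<And>x y. 0 \<le> rho x y" by (rule rho_nonneg)
  show "\<And>x y. rho x y = rho y x" by (rule rho_sym)
  show "rho x y = 0 \<longleftrightarrow> x = y" if "x \<in> circle" "y \<in> circle" for x y
  proof -
    have "rho x y = 0 \<longleftrightarrow> A x = A y" using key[OF that] Dc_zero A_range by simp
    also have "\<dots> \<longleftrightarrow> x = y" using A_inj that by blast
    finally show ?thesis .
  qed
  show "rho x z \<le> rho x y + rho y z" if "x \<in> circle" "y \<in> circle" "z \<in> circle" for x y z
    using key that Dc_tri A_range by simp
qed

lemma Phi_circle: "Phi \<mu> u \<in> circle"
  by (simp add: Phi_ee)

lemma Phi_inj: "inj_on (Phi \<mu>) circle"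
proof (rule inj_onI)
  fix u v assume uv: "u \<in> circle" "v \<in> circle" "Phi \<mu> u = Phi \<mu> v"
  then have "A u = A v" using cpos_Phi by metis
  then show "u = v" using A_inj uv by blast
qed

lemma Phi_surj: assumes "w \<in> circle" shows "\<exists>u\<in>circle. Phi \<mu> u = w"
proof -
  define s where "s = cpos w"
  have s: "0 \<le> s" "s < 1" using cpos_ge0 cpos_lt1 s_def by auto
  have "continuous_on {0..1} C" by (intro continuous_at_imp_continuous_on ballI C_cont)
  then obtain t where t: "0 \<le> t" "t \<le> 1" "C t = s" using IVT'[of C 0 s 1] s C0 C1 by auto
  have "t \<noteq> 1" using t(3) s(2) C1 by auto
  then have t1: "t < 1" using t(2) by simp
  define u where "u = ee t"
  have "cpos u = t" using t(1) t1 by (simp add: u_def cpos_ee frac_small)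
  then have "A u = s" using t(3) by (simp add: A_C)
  then have "Phi \<mu> u = ee (cpos w)" by (simp add: Phi_ee s_def)
  also have "\<dots> = w" using ee_cpos[OF assms] .
  finally show ?thesis by (intro bexI[of _ u]) (auto simp: u_def)
qed

lemma Phi_bij: "bij_betw (Phi \<mu>) circle circle"
proof -
  have "Phi \<mu> ` circle = circle"
  proof
    show "Phi \<mu> ` circle \<subseteq> circle" using Phi_circle by blast
    show "circle \<subseteq> Phi \<mu> ` circle" using Phi_surj by blast
  qed
  then show ?thesis using Phi_inj by (simp add: bij_betw_def)
qed

lemma Phi_inv: assumes "w \<in> circle"
  shows "inv_into circle (Phi \<mu>) w \<in> circle" "Phi \<mu> (inv_into circle (Phi \<mu>) w) = w"
proof -
  have "w \<in> Phi \<mu> ` circle" using Phi_surj assms by blast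
  then show "inv_into circle (Phi \<mu>) w \<in> circle" "Phi \<mu> (inv_into circle (Phi \<mu>) w) = w"
    by (rule inv_into_into, rule f_inv_into_f)
qed

lemma Phi_inv2: "u \<in> circle \<Longrightarrow> inv_into circle (Phi \<mu>) (Phi \<mu> u) = u"
  using Phi_inj by (rule inv_into_f_f)

lemma rho_le_image: assumes j: "j \<in> {1..N}" and xy: "x \<in> circle" "y \<in> circle"
  shows "rho (f j x) (f j y) \<le> measure \<mu> (f j ` arc x y)"
proof -
  let ?K = "f j ` arc x y"
  have cf: "continuous_on (arc x y) (f j)"
    using homeomorphism_cont1[OF homeo_h[OF j]] arc_sub by (rule continuous_on_subset)
  have Kc: "?K \<subseteq> circle" using f_circle[OF j] arc_sub by blast
  have conn: "connected ?K" by (rule connected_continuous_image[OF cf connected_arc[OF xy(1)]])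
  have "compact ?K" by (rule compact_continuous_image[OF cf compact_arc[OF xy(1)]])
  then have Kin: "?K \<in> sets \<mu>" using Kc by (intro closed_in compact_imp_closed)
  have fx: "f j x \<in> ?K" "f j y \<in> ?K" using left_in_arc[OF xy(1)] right_in_arc[OF xy(2)] by auto
  from connected_arc_cases[OF Kc conn fx]
  show ?thesis
  proof
    assume "arc (f j x) (f j y) \<subseteq> ?K"
    then have "measure \<mu> (arc (f j x) (f j y)) \<le> measure \<mu> ?K" using Kin by (rule finite_measure_mono)
    then show ?thesis unfolding rho_def by linarith
  next
    assume "arc (f j y) (f j x) \<subseteq> ?K"
    then have "measure \<mu> (arc (f j y) (f j x)) \<le> measure \<mu> ?K" using Kin by (rule finite_measure_mono)
    then show ?thesis unfolding rho_def by linarith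
  qed
qed

lemma nonexp_f: "nonexpansive_on_average N f p rho"
  unfolding nonexpansive_on_average_def
proof (intro ballI)
  fix x y assume xy: "x \<in> circle" "y \<in> circle"
  have pn: "\<And>j. j \<in> {1..N} \<Longrightarrow> 0 \<le> p j" using p_pos by (simp add: less_imp_le)
  have "(\<Sum>j=1..N. p j * rho (f j x) (f j y)) \<le> (\<Sum>j=1..N. p j * measure \<mu> (f j ` arc x y))"
    using rho_le_image xy pn by (intro sum_mono mult_left_mono) auto
  also have "\<dots> = measure \<mu> (arc x y)" using inv_eq'[OF arc_in[OF xy(1)]] by simp
  finally have 1: "(\<Sum>j=1..N. p j * rho (f j x) (f j y)) \<le> measure \<mu> (arc x y)" .
  have "(\<Sum>j=1..N. p j * rho (f j x) (f j y)) = (\<Sum>j=1..N. p j * rho (f j y) (f j x))"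
    using rho_sym by simp
  also have "\<dots> \<le> (\<Sum>j=1..N. p j * measure \<mu> (f j ` arc y x))"
    using rho_le_image xy pn by (intro sum_mono mult_left_mono) auto
  also have "\<dots> = measure \<mu> (arc y x)" using inv_eq'[OF arc_in[OF xy(2)]] by simp
  finally have 2: "(\<Sum>j=1..N. p j * rho (f j x) (f j y)) \<le> measure \<mu> (arc y x)" .
  show "(\<Sum>j=1..N. p j * rho (f j x) (f j y)) \<le> rho x y" using 1 2 by (simp add: rho_def)
qed

abbreviation "gg \<equiv> (\<lambda>j. Phi \<mu> \<circ> f j \<circ> inv_into circle (Phi \<mu>))"

lemma gg_dS: assumes "j \<in> {1..N}" "x \<in> circle" "y \<in> circle"
  shows "dS (gg j x) (gg j y) = rho (f j (inv_into circle (Phi \<mu>) x)) (f j (inv_into circle (Phi \<mu>) y))"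
  using keyid f_circle[OF assms(1)] Phi_inv assms by simp

lemma dS_inv: assumes "x \<in> circle" "y \<in> circle"
  shows "dS x y = rho (inv_into circle (Phi \<mu>) x) (inv_into circle (Phi \<mu>) y)"
  using keyid[OF Phi_inv(1)[OF assms(1)] Phi_inv(1)[OF assms(2)]] Phi_inv(2) assms by simp

lemma nonexp_g: "nonexpansive_on_average N gg p dS"
  unfolding nonexpansive_on_average_def
proof (intro ballI)
  fix x y assume xy: "x \<in> circle" "y \<in> circle"
  let ?u = "inv_into circle (Phi \<mu>) x" and ?v = "inv_into circle (Phi \<mu>) y"
  have "(\<Sum>j=1..N. p j * dS (gg j x) (gg j y)) = (\<Sum>j=1..N. p j * rho (f j ?u) (f j ?v))"
    using gg_dS xy by (intro sum.cong) auto
  also have "\<dots> \<le> rho ?u ?v"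
    using nonexp_f Phi_inv(1)[OF xy(1)] Phi_inv(1)[OF xy(2)] unfolding nonexpansive_on_average_def by blast
  also have "\<dots> = dS x y" using dS_inv[OF xy] by simp
  finally show "(\<Sum>j=1..N. p j * dS (gg j x) (gg j y)) \<le> dS x y" .
qed

lemma Lset_eq: "Lset N gg dS = Lset N f rho"
proof -
  have "(\<forall>j\<in>{1..N}. \<forall>x\<in>circle. \<forall>y\<in>circle. dS x y = s \<longrightarrow> dS (gg j x) (gg j y) = s) \<longleftrightarrow>
        (\<forall>j\<in>{1..N}. \<forall>x\<in>circle. \<forall>y\<in>circle. rho x y = s \<longrightarrow> rho (f j x) (f j y) = s)" for s
  proof
    assume H: "\<forall>j\<in>{1..N}. \<forall>x\<in>circle. \<forall>y\<in>circle. dS x y = s \<longrightarrow> dS (gg j x) (gg j y) = s"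
    show "\<forall>j\<in>{1..N}. \<forall>x\<in>circle. \<forall>y\<in>circle. rho x y = s \<longrightarrow> rho (f j x) (f j y) = s"
    proof (intro ballI impI)
      fix j x y assume j: "j \<in> {1..N}" and xy: "x \<in> circle" "y \<in> circle" and r: "rho x y = s"
      have "dS (Phi \<mu> x) (Phi \<mu> y) = s" using keyid[OF xy] r by simp
      then have "dS (gg j (Phi \<mu> x)) (gg j (Phi \<mu> y)) = s" using H j Phi_circle by blast
      moreover have "gg j (Phi \<mu> x) = Phi \<mu> (f j x)" "gg j (Phi \<mu> y) = Phi \<mu> (f j y)"
        using Phi_inv2 xy by auto
      ultimately have "dS (Phi \<mu> (f j x)) (Phi \<mu> (f j y)) = s" by simp
      then show "rho (f j x) (f j y) = s" using keyid[OF f_circle[OF j xy(1)] f_circle[OF j xy(2)]] by simp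
    qed
  next
    assume H: "\<forall>j\<in>{1..N}. \<forall>x\<in>circle. \<forall>y\<in>circle. rho x y = s \<longrightarrow> rho (f j x) (f j y) = s"
    show "\<forall>j\<in>{1..N}. \<forall>x\<in>circle. \<forall>y\<in>circle. dS x y = s \<longrightarrow> dS (gg j x) (gg j y) = s"
    proof (intro ballI impI)
      fix j x y assume j: "j \<in> {1..N}" and xy: "x \<in> circle" "y \<in> circle" and r: "dS x y = s"
      have "rho (inv_into circle (Phi \<mu>) x) (inv_into circle (Phi \<mu>) y) = s" using dS_inv[OF xy] r by simp
      then have "rho (f j (inv_into circle (Phi \<mu>) x)) (f j (inv_into circle (Phi \<mu>) y)) = s"
        using H j Phi_inv(1) xy by blast
      then show "dS (gg j x) (gg j y) = s" using gg_dS[OF j xy] by simp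
    qed
  qed
  then show ?thesis unfolding Lset_def by blast
qed

end
theorem proposition1:
  fixes N :: nat and f :: "nat \<Rightarrow> complex \<Rightarrow> complex" and p :: "nat \<Rightarrow> real"
    and \<mu> :: "complex measure"
  assumes homeo: "\<forall>j\<in>{1..N}. \<exists>g. homeomorphism circle circle (f j) g"
    and p_pos: "\<forall>j\<in>{1..N}. p j > 0"
    and p_sum: "(\<Sum>j=1..N. p j) = 1"
    and bmin: "backward_minimal N f"
    and inv: "invariant_measure N (inverse_family f) p \<mu>"
  defines "\<rho> \<equiv> (\<lambda>x y. min (measure \<mu> (arc x y)) (measure \<mu> (arc y x)))"
    and "g \<equiv> (\<lambda>j. Phi \<mu> \<circ> f j \<circ> inv_into circle (Phi \<mu>))"
  shows "Metric_space circle \<rho>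
         \<and> nonexpansive_on_average N f p \<rho>
         \<and> bij_betw (Phi \<mu>) circle circle
         \<and> nonexpansive_on_average N g p dS
         \<and> Lset N g dS = Lset N f \<rho>"
proof -
  interpret S1 N f p \<mu> using homeo p_pos p_sum bmin inv by unfold_locales
  have rho_eq: "\<rho> = rho" unfolding \<rho>_def by (intro ext) (simp add: rho_def)
  have g_eq: "g = gg" unfolding g_def ..
  show ?thesis unfolding rho_eq g_eq using metric nonexp_f Phi_bij nonexp_g Lset_eq by blast
qed

end
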